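(* Consider the $r$-cGA with parameter $K$ on $r\text{-OneMax}$ with frequencies $p^{(t)}_{i,j}$. For $t\geq 0$ let $\varphi_t:=\sum_{i=1}^n(1-p^{(t)}_{i,r-1})=n-\sum_{i=1}^n p^{(t)}_{i,r-1}$. If there is some $s>0$ such that $p^{(t)}_{i,r-1}\geq s$ for all $i\in\{1,\dots,n\}$, and furthermore $\varphi_t\geq 1/2$, then \[\mathbb{E}(\varphi_t-\varphi_{t+1}\mid\varphi_t)\geq\frac{2s\sqrt{\varphi_t}}{15K}.\]
   Context: Let $n\geq 1$, $r\geq 2$ be integers and $K>0$. The $r$-cGA maximizing $f$ maintains frequencies $p^{(t)}_{i,j}$ ($i\in\{1,\dots,n\}$, $j\in\{0,\dots,r-1\}$), initialized to $1/r$. In iteration $t$ it samples $x,y\in\{0,\dots,r-1\}^n$ independently, each position $i$ independently with $\Pr[x_i=j]=p^{(t)}_{i,j}$; if $f(x)<f(y)$ it swaps $x$ and $y$; then it sets $p^{(t+1)}_{i,j}=p^{(t)}_{i,j}+\frac1K(\mathbf{1}[x_i=j]-\mathbf{1}[y_i=j])$ for all $i,j$, with no margins. It is assumed that $1/r$ is an integer multiple of $1/K$. Here $f=r\text{-OneMax}$, $r\text{-OneMax}(x)=\sum_{i=1}^n\mathbf{1}[x_i=r-1]$. *)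

theory Defs
  imports Complex_Main "HOL-Library.FuncSet"
begin

(* A frequency state is p :: nat => nat => real, p i j = p_{i,j} for i < n, j < r.
   A search point is x :: nat => nat with x i in {0..<r} for i < n (extensional). *)

definition search_points :: "nat \<Rightarrow> nat \<Rightarrow> (nat \<Rightarrow> nat) set" where
  "search_points n r = ({0..<n} \<rightarrow>\<^sub>E {0..<r})"

definition rOneMax :: "nat \<Rightarrow> nat \<Rightarrow> (nat \<Rightarrow> nat) \<Rightarrow> nat" where
  "rOneMax n r x = card {i \<in> {0..<n}. x i = r - 1}"

definition sample_prob :: "nat \<Rightarrow> (nat \<Rightarrow> nat \<Rightarrow> real) \<Rightarrow> (nat \<Rightarrow> nat) \<Rightarrow> real" where
  "sample_prob n p x = (\<Prod>i<n. p i (x i))"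

definition freq_upd :: "real \<Rightarrow> (nat \<Rightarrow> nat \<Rightarrow> real) \<Rightarrow> (nat \<Rightarrow> nat) \<Rightarrow> (nat \<Rightarrow> nat)
    \<Rightarrow> (nat \<Rightarrow> nat \<Rightarrow> real)" where
  "freq_upd K p x y = (\<lambda>i j. p i j + (1 / K) *
      ((if x i = j then 1 else 0) - (if y i = j then 1 else 0)))"

definition cga_step :: "nat \<Rightarrow> nat \<Rightarrow> real \<Rightarrow> (nat \<Rightarrow> nat \<Rightarrow> real) \<Rightarrow> (nat \<Rightarrow> nat)
    \<Rightarrow> (nat \<Rightarrow> nat) \<Rightarrow> (nat \<Rightarrow> nat \<Rightarrow> real)" where
  "cga_step n r K p x y =
     (if rOneMax n r x < rOneMax n r y then freq_upd K p y x else freq_upd K p x y)"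

(* cga_state n r K t p : p is a possible frequency state p^{(t)} after t iterations
   (i.e. in the support of the distribution of p^{(t)}) *)
inductive cga_state :: "nat \<Rightarrow> nat \<Rightarrow> real \<Rightarrow> nat \<Rightarrow> (nat \<Rightarrow> nat \<Rightarrow> real) \<Rightarrow> bool"
  for n r K where
  init: "cga_state n r K 0 (\<lambda>i j. 1 / real r)"
| step: "cga_state n r K t p \<Longrightarrow> x \<in> search_points n r \<Longrightarrow> y \<in> search_points n r
         \<Longrightarrow> sample_prob n p x > 0 \<Longrightarrow> sample_prob n p y > 0
         \<Longrightarrow> cga_state n r K (Suc t) (cga_step n r K p x y)"

definition phi :: "nat \<Rightarrow> nat \<Rightarrow> (nat \<Rightarrow> nat \<Rightarrow> real) \<Rightarrow> real" where
  "phi n r p = (\<Sum>i<n. 1 - p i (r - 1))"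

(* expected one-step decrease E(phi_t - phi_{t+1} | p^{(t)} = p) *)
definition expected_drift :: "nat \<Rightarrow> nat \<Rightarrow> real \<Rightarrow> (nat \<Rightarrow> nat \<Rightarrow> real) \<Rightarrow> real" where
  "expected_drift n r K p =
     (\<Sum>x\<in>search_points n r. \<Sum>y\<in>search_points n r.
        sample_prob n p x * sample_prob n p y * (phi n r p - phi n r (cga_step n r K p x y)))"

end

theory Submission imports Defs begin

lemma sp_Suc_sum:
  "(\<Sum>x\<in>search_points (Suc n) r. F x) = (\<Sum>x\<in>search_points n r. \<Sum>a\<in>{0..<r}. F (x(n:=a)))"
proof -
  have e: "{0..<Suc n} = insert n {0..<n}" by auto
  have "search_points (Suc n) r = (\<lambda>(y, g). g(n := y)) ` ({0..<r} \<times> search_points n r)"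
    unfolding search_points_def e PiE_insert_eq by simp
  moreover have "inj_on (\<lambda>(y, g). g(n := y)) ({0..<r} \<times> search_points n r)"
    unfolding search_points_def using inj_combinator[of n "{0..<n}" "\<lambda>_. {0..<r}"] by simp
  ultimately have "(\<Sum>x\<in>search_points (Suc n) r. F x) = (\<Sum>(a,x)\<in>{0..<r} \<times> search_points n r. F (x(n:=a)))"
    by (simp add: sum.reindex case_prod_unfold)
  also have "\<dots> = (\<Sum>a\<in>{0..<r}. \<Sum>x\<in>search_points n r. F (x(n:=a)))"
    by (simp add: sum.cartesian_product)
  also have "\<dots> = (\<Sum>x\<in>search_points n r. \<Sum>a\<in>{0..<r}. F (x(n:=a)))"
    by (rule sum.swap)
  finally show ?thesis .
qed

lemma sp_finite: "finite (search_points n r)"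
  unfolding search_points_def by (simp add: finite_PiE)

lemma sp_upd: "x \<in> search_points n r \<Longrightarrow> a < r \<Longrightarrow> x(n:=a) \<in> search_points (Suc n) r"
  unfolding search_points_def by (auto simp: PiE_def extensional_def)

lemma sample_prob_upd: "sample_prob (Suc n) p (x(n:=a)) = sample_prob n p x * p n a"
  unfolding sample_prob_def by (simp add: prod.lessThan_Suc)

lemma om_sum: "real (rOneMax n r x) = (\<Sum>i<n. of_bool (x i = r - 1))"
proof -
  have "(\<Sum>i<n. (of_bool (x i = r - 1)::real)) = real (card ({..<n} \<inter> {i. x i = r - 1}))"
    by simp
  also have "{..<n} \<inter> {i. x i = r - 1} = {i \<in> {0..<n}. x i = r - 1}" by auto
  finally show ?thesis unfolding rOneMax_def by simp
qed

lemma om_upd: "real (rOneMax (Suc n) r (x(n:=a))) = real (rOneMax n r x) + of_bool (a = r - 1)"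
  unfolding om_sum by simp


definition W :: "nat \<Rightarrow> nat \<Rightarrow> (nat \<Rightarrow> nat \<Rightarrow> real) \<Rightarrow> (real \<Rightarrow> real) \<Rightarrow> real" where
  "W n r p g = (\<Sum>x\<in>search_points n r. \<Sum>y\<in>search_points n r.
     sample_prob n p x * sample_prob n p y * g (real (rOneMax n r x) - real (rOneMax n r y)))"

lemma swap4: "(\<Sum>x\<in>X. \<Sum>a\<in>A. \<Sum>y\<in>Y. \<Sum>b\<in>B. G x a y b) = (\<Sum>a\<in>A. \<Sum>b\<in>B. \<Sum>x\<in>X. \<Sum>y\<in>Y. G x a y b)"
proof -
  have "(\<Sum>x\<in>X. \<Sum>a\<in>A. \<Sum>y\<in>Y. \<Sum>b\<in>B. G x a y b) = (\<Sum>a\<in>A. \<Sum>x\<in>X. \<Sum>y\<in>Y. \<Sum>b\<in>B. G x a y b)"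
    by (rule sum.swap)
  also have "\<dots> = (\<Sum>a\<in>A. \<Sum>x\<in>X. \<Sum>b\<in>B. \<Sum>y\<in>Y. G x a y b)"
    by (intro sum.cong refl) (rule sum.swap)
  also have "\<dots> = (\<Sum>a\<in>A. \<Sum>b\<in>B. \<Sum>x\<in>X. \<Sum>y\<in>Y. G x a y b)"
    by (intro sum.cong refl) (rule sum.swap)
  finally show ?thesis .
qed

lemma W_Suc: "W (Suc n) r p g = (\<Sum>a\<in>{0..<r}. \<Sum>b\<in>{0..<r}. p n a * p n b *
   W n r p (\<lambda>z. g (z + (of_bool (a = r - 1) - of_bool (b = r - 1)))))"
proof -
  have "W (Suc n) r p g = (\<Sum>x\<in>search_points n r. \<Sum>a\<in>{0..<r}. \<Sum>y\<in>search_points n r. \<Sum>b\<in>{0..<r}.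
     p n a * p n b * (sample_prob n p x * sample_prob n p y * g (real (rOneMax n r x) - real (rOneMax n r y) + (of_bool (a = r - 1) - of_bool (b = r - 1)))))"
    unfolding W_def sp_Suc_sum sample_prob_upd om_upd by (simp add: algebra_simps sum_distrib_left)
  also have "\<dots> = (\<Sum>a\<in>{0..<r}. \<Sum>b\<in>{0..<r}. \<Sum>x\<in>search_points n r. \<Sum>y\<in>search_points n r.
     p n a * p n b * (sample_prob n p x * sample_prob n p y * g (real (rOneMax n r x) - real (rOneMax n r y) + (of_bool (a = r - 1) - of_bool (b = r - 1)))))"
    by (rule swap4)
  also have "\<dots> = (\<Sum>a\<in>{0..<r}. \<Sum>b\<in>{0..<r}. p n a * p n b *
   W n r p (\<lambda>z. g (z + (of_bool (a = r - 1) - of_bool (b = r - 1)))))"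
    unfolding W_def by (simp add: sum_distrib_left)
  finally show ?thesis .
qed

lemma W_sym: "W n r p g = W n r p (\<lambda>z. g (- z))"
  unfolding W_def by (subst sum.swap) (simp add: mult.commute)

lemma W_odd: assumes "\<And>z. g (- z) = - g z" shows "W n r p g = 0"
proof -
  have "W n r p g = W n r p (\<lambda>z. - g z)" using W_sym[of n r p g] assms by simp
  also have "\<dots> = - W n r p g" unfolding W_def by (simp add: sum_negf)
  finally show ?thesis by simp
qed

lemma W_lin: "W n r p (\<lambda>z. c * f z + g z) = c * W n r p f + W n r p g"
  unfolding W_def by (simp add: algebra_simps sum.distrib sum_distrib_left)

lemma W_lin1: "W n r p (\<lambda>z. c * f z) = c * W n r p f"
  unfolding W_def by (simp add: algebra_simps sum.distrib sum_distrib_left)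

lemma W_mono: assumes "\<forall>i<n. \<forall>j<r. p i j \<ge> 0" and "\<And>z. f z \<le> g z"
  shows "W n r p f \<le> W n r p g"
proof -
  have "sample_prob n p x \<ge> 0" if "x \<in> search_points n r" for x
    using that assms(1) unfolding sample_prob_def search_points_def by (auto intro!: prod_nonneg simp: PiE_def Pi_def)
  then show ?thesis unfolding W_def
    by (intro sum_mono mult_left_mono assms(2)) auto
qed

lemma W_one: assumes "\<forall>i<n. (\<Sum>j\<in>{0..<r}. p i j) = 1" shows "W n r p (\<lambda>z. 1) = 1"
  using assms
proof (induction n)
  case 0
  then show ?case unfolding W_def search_points_def sample_prob_def by simp
next
  case (Suc n)
  then have "W n r p (\<lambda>z. 1) = 1" by simp
  then have "W (Suc n) r p (\<lambda>z. 1) = (\<Sum>a\<in>{0..<r}. \<Sum>b\<in>{0..<r}. p n a * p n b)"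
    unfolding W_Suc by simp
  also have "\<dots> = (\<Sum>a\<in>{0..<r}. p n a) * (\<Sum>b\<in>{0..<r}. p n b)"
    by (rule sum_product[symmetric])
  finally show ?case using Suc.prems by simp
qed

lemma W_z: "W n r p (\<lambda>z. z) = 0" by (rule W_odd) simp
lemma W_z3: "W n r p (\<lambda>z. z^3) = 0" by (rule W_odd) simp

lemma W_add: "W n r p (\<lambda>z. f z + g z) = W n r p f + W n r p g"
  unfolding W_def by (simp add: algebra_simps sum.distrib)

lemma W_sq_shift: "W n r p (\<lambda>z. (z+d)^2) = W n r p (\<lambda>z. z^2) + 2*d*W n r p (\<lambda>z. z) + d^2 * W n r p (\<lambda>z. 1)"
proof -
  have e: "(\<lambda>z. (z+d)^2) = (\<lambda>z. z^2 + ((2*d)*z + d^2*1))"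
    by (rule ext) (simp add: power2_sum)
  show ?thesis unfolding e by (simp only: W_add W_lin1)
qed

lemma W_4_shift: "W n r p (\<lambda>z. (z+d)^4) = W n r p (\<lambda>z. z^4) + 4*d*W n r p (\<lambda>z. z^3)
   + 6*d^2*W n r p (\<lambda>z. z^2) + 4*d^3*W n r p (\<lambda>z. z) + d^4 * W n r p (\<lambda>z. 1)"
proof -
  have e: "(\<lambda>z. (z+d)^4) = (\<lambda>z. z^4 + ((4*d)*z^3 + ((6*d^2)*z^2 + ((4*d^3)*z + d^4 * 1))))"
    by (rule ext) algebra
  show ?thesis unfolding e by (simp only: W_add W_lin1)
qed

lemma ind_sum: fixes r :: nat shows "r \<ge> 1 \<Longrightarrow> (\<Sum>a\<in>{0..<r}. pp a * of_bool (a = r - 1)) = (pp (r - 1) :: real)"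
proof -
  assume "r \<ge> 1"
  then have "{0..<r} \<inter> {a. a = r - 1} = {r - 1}" by auto
  then show ?thesis using \<open>r \<ge> 1\<close> by auto
qed

lemma ind_split:
  fixes r :: nat
  assumes "r \<ge> 1" "(\<Sum>j\<in>{0..<r}. pp j) = (1::real)"
  shows "(\<Sum>a\<in>{0..<r}. pp a * g (a = r - 1)) = pp (r - 1) * g True + (1 - pp (r - 1)) * g False"
proof -
  have e: "{0..<r} = insert (r - 1) {0..<r - 1}" using assms(1) by auto
  have "(\<Sum>a\<in>{0..<r - 1}. pp a * g (a = r - 1)) = (\<Sum>a\<in>{0..<r - 1}. pp a) * g False"
    by (simp add: sum_distrib_right)
  moreover have "(\<Sum>a\<in>{0..<r - 1}. pp a) = 1 - pp (r - 1)"
    using assms(2) unfolding e by simp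
  ultimately show ?thesis unfolding e by simp
qed

lemma d2_sum:
  fixes r :: nat
  assumes "r \<ge> 1" "(\<Sum>j\<in>{0..<r}. pp j) = (1::real)"
  shows "(\<Sum>a\<in>{0..<r}. \<Sum>b\<in>{0..<r}. pp a * pp b * (of_bool (a = r - 1) - of_bool (b = r - 1))^2)
     = 2 * pp (r - 1) * (1 - pp (r - 1))"
proof -
  have "(\<Sum>a\<in>{0..<r}. \<Sum>b\<in>{0..<r}. pp a * pp b * (of_bool (a = r - 1) - of_bool (b = r - 1))^2)
    = (\<Sum>a\<in>{0..<r}. pp a * (\<lambda>A. \<Sum>b\<in>{0..<r}. pp b * (\<lambda>B. (of_bool A - of_bool B)^2) (b = r - 1)) (a = r - 1))"
    by (simp add: sum_distrib_left mult.assoc)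
  also have "\<dots> = (\<Sum>a\<in>{0..<r}. pp a * (\<lambda>A. pp (r - 1) * (of_bool A - 1)^2 + (1 - pp (r - 1)) * (of_bool A)^2) (a = r - 1))"
    by (subst ind_split[OF assms]) simp
  also have "\<dots> = 2 * pp (r - 1) * (1 - pp (r - 1))"
    by (subst ind_split[OF assms]) (simp add: algebra_simps)
  finally show ?thesis .
qed

lemma pp1_sum:
  fixes r :: nat
  assumes "(\<Sum>j\<in>{0..<r}. pp j) = (1::real)"
  shows "(\<Sum>a\<in>{0..<r}. \<Sum>b\<in>{0..<r}. pp a * pp b * c) = c"
proof -
  have "(\<Sum>b\<in>{0..<r}. pp a * pp b * c) = pp a * c" for a
  proof -
    have "(\<Sum>b\<in>{0..<r}. pp a * pp b * c) = (pp a * c) * (\<Sum>b\<in>{0..<r}. pp b)"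
      by (simp add: sum_distrib_left mult_ac)
    then show ?thesis using assms by simp
  qed
  then have "(\<Sum>a\<in>{0..<r}. \<Sum>b\<in>{0..<r}. pp a * pp b * c) = (\<Sum>a\<in>{0..<r}. pp a) * c"
    by (simp add: sum_distrib_right)
  then show ?thesis using assms by simp
qed

lemma d4_eq: "(of_bool A - of_bool B :: real)^4 = (of_bool A - of_bool B)^2"
  by (cases A; cases B) auto

lemma W_sq_Suc:
  fixes r :: nat
  assumes "r \<ge> 1" "\<forall>i<Suc n. (\<Sum>j\<in>{0..<r}. p i j) = 1"
  shows "W (Suc n) r p (\<lambda>z. z^2) = W n r p (\<lambda>z. z^2) + 2 * p n (r - 1) * (1 - p n (r - 1))"
proof -
  have H: "\<forall>i<n. (\<Sum>j\<in>{0..<r}. p i j) = 1" and Hn: "(\<Sum>j\<in>{0..<r}. p n j) = 1" using assms(2) by auto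
  have "W (Suc n) r p (\<lambda>z. z^2) = (\<Sum>a\<in>{0..<r}. \<Sum>b\<in>{0..<r}. p n a * p n b * W n r p (\<lambda>z. z^2)
     + p n a * p n b * (of_bool (a = r - 1) - of_bool (b = r - 1))^2)"
    unfolding W_Suc W_sq_shift W_z W_one[OF H] by (simp add: algebra_simps)
  also have "\<dots> = W n r p (\<lambda>z. z^2) + 2 * p n (r - 1) * (1 - p n (r - 1))"
    unfolding sum.distrib pp1_sum[OF Hn] d2_sum[OF assms(1) Hn] ..
  finally show ?thesis .
qed

lemma W_4_Suc:
  fixes r :: nat
  assumes "r \<ge> 1" "\<forall>i<Suc n. (\<Sum>j\<in>{0..<r}. p i j) = 1"
  shows "W (Suc n) r p (\<lambda>z. z^4) = W n r p (\<lambda>z. z^4) + (6 * W n r p (\<lambda>z. z^2) + 1) * (2 * p n (r - 1) * (1 - p n (r - 1)))"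
proof -
  have H: "\<forall>i<n. (\<Sum>j\<in>{0..<r}. p i j) = 1" and Hn: "(\<Sum>j\<in>{0..<r}. p n j) = 1" using assms(2) by auto
  have "W (Suc n) r p (\<lambda>z. z^4) = (\<Sum>a\<in>{0..<r}. \<Sum>b\<in>{0..<r}. p n a * p n b * W n r p (\<lambda>z. z^4)
     + p n a * p n b * (of_bool (a = r - 1) - of_bool (b = r - 1))^2 * (6 * W n r p (\<lambda>z. z^2) + 1))"
    unfolding W_Suc W_4_shift W_z W_z3 W_one[OF H] d4_eq by (simp add: algebra_simps)
  also have "\<dots> = W n r p (\<lambda>z. z^4) + (\<Sum>a\<in>{0..<r}. \<Sum>b\<in>{0..<r}. p n a * p n b * (of_bool (a = r - 1) - of_bool (b = r - 1))^2) * (6 * W n r p (\<lambda>z. z^2) + 1)"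
    unfolding sum.distrib pp1_sum[OF Hn] sum_distrib_right ..
  also have "\<dots> = W n r p (\<lambda>z. z^4) + (6 * W n r p (\<lambda>z. z^2) + 1) * (2 * p n (r - 1) * (1 - p n (r - 1)))"
    unfolding d2_sum[OF assms(1) Hn] by simp
  finally show ?thesis .
qed

lemma W_moments:
  fixes r :: nat
  assumes "r \<ge> 1" "\<forall>i<n. (\<Sum>j\<in>{0..<r}. p i j) = 1"
  shows "W n r p (\<lambda>z. z^2) = 2 * (\<Sum>i<n. p i (r - 1) * (1 - p i (r - 1)))
    \<and> W n r p (\<lambda>z. z^4) \<le> W n r p (\<lambda>z. z^2) + 3 * (W n r p (\<lambda>z. z^2))^2"
  using assms(2)
proof (induction n)
  case 0
  then show ?case unfolding W_def search_points_def sample_prob_def by simp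
next
  case (Suc n)
  define A where "A = W n r p (\<lambda>z. z^2)"
  define v where "v = p n (r - 1) * (1 - p n (r - 1))"
  have IH: "A = 2 * (\<Sum>i<n. p i (r - 1) * (1 - p i (r - 1)))" "W n r p (\<lambda>z. z^4) \<le> A + 3 * A^2"
    using Suc unfolding A_def by auto
  have s2: "W (Suc n) r p (\<lambda>z. z^2) = A + 2 * v"
    using W_sq_Suc[OF assms(1) Suc.prems] unfolding A_def v_def by simp
  have s4: "W (Suc n) r p (\<lambda>z. z^4) = W n r p (\<lambda>z. z^4) + (6 * A + 1) * (2 * v)"
    using W_4_Suc[OF assms(1) Suc.prems] unfolding A_def v_def by simp
  have "W (Suc n) r p (\<lambda>z. z^4) \<le> (A + 2 * v) + 3 * (A + 2 * v)^2"
  proof -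
    have "(A + 2 * v)^2 = A^2 + 4 * (A * v) + 4 * v^2" by algebra
    moreover have "(6 * A + 1) * (2 * v) = 12 * (A * v) + 2 * v" by algebra
    ultimately show ?thesis unfolding s4 using IH(2) zero_le_power2[of v] by linarith
  qed
  then show ?case unfolding s2 using IH(1) by (simp add: v_def)
qed

definition good :: "nat \<Rightarrow> nat \<Rightarrow> real \<Rightarrow> (nat \<Rightarrow> nat \<Rightarrow> real) \<Rightarrow> bool" where
  "good n r K p = (\<forall>i<n. (\<forall>j<r. \<exists>m::nat. p i j = real m / K) \<and> (\<Sum>j\<in>{0..<r}. p i j) = 1)"

lemma sp_mem: "x \<in> search_points n r \<Longrightarrow> i < n \<Longrightarrow> x i < r"
  unfolding search_points_def by (auto simp: PiE_def Pi_def)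

lemma sp_pos: "sample_prob n p x > 0 \<Longrightarrow> i < n \<Longrightarrow> p i (x i) \<noteq> 0"
  unfolding sample_prob_def by (metis finite_lessThan lessThan_iff less_irrefl prod_zero_iff)

lemma good_upd:
  assumes g: "good n r K p" and K: "K > 0" and w: "w \<in> search_points n r" and l: "l \<in> search_points n r"
    and lp: "sample_prob n p l > 0"
  shows "good n r K (freq_upd K p w l)"
  unfolding good_def
proof (rule allI, rule impI, rule conjI)
  fix i assume i: "i < n"
  have wi: "w i < r" and li: "l i < r" using sp_mem w l i by auto
  have nz: "p i (l i) \<noteq> 0" using sp_pos[OF lp i] .
  have gi: "\<forall>j<r. \<exists>m::nat. p i j = real m / K" "(\<Sum>j\<in>{0..<r}. p i j) = 1" using g i unfolding good_def by auto
  show "\<forall>j<r. \<exists>m::nat. freq_upd K p w l i j = real m / K"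
  proof (intro allI impI)
    fix j assume j: "j < r"
    obtain m :: nat where m: "p i j = real m / K" using gi(1) j by auto
    show "\<exists>m::nat. freq_upd K p w l i j = real m / K"
    proof (cases "w i = j \<and> l i \<noteq> j")
      case True
      then have "freq_upd K p w l i j = real (Suc m) / K" unfolding freq_upd_def m using K by (simp add: field_simps)
      then show ?thesis by blast
    next
      case False
      show ?thesis
      proof (cases "l i = j \<and> w i \<noteq> j")
        case True
        then have "m \<noteq> 0" using nz m by auto
        then have "freq_upd K p w l i j = real (m - 1) / K" unfolding freq_upd_def m using K True
          by (simp add: field_simps of_nat_diff)
        then show ?thesis by blast
      next
        case False2: False
        then have "freq_upd K p w l i j = real m / K" unfolding freq_upd_def m using False by auto
        then show ?thesis by blast
      qed
    qed
  qed
  have "(\<Sum>j\<in>{0..<r}. freq_upd K p w l i j) = (\<Sum>j\<in>{0..<r}. p i j)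
      + (1/K) * ((\<Sum>j\<in>{0..<r}. of_bool (w i = j)) - (\<Sum>j\<in>{0..<r}. of_bool (l i = j)))"
  proof -
    have "(\<Sum>j\<in>{0..<r}. freq_upd K p w l i j) = (\<Sum>j\<in>{0..<r}. p i j + (1/K) * (of_bool (w i = j) - of_bool (l i = j)))"
      unfolding freq_upd_def by (intro sum.cong refl) simp
    then show ?thesis by (simp only: sum.distrib sum_distrib_left[symmetric] sum_subtractf)
  qed
  also have "(\<Sum>j\<in>{0..<r}. of_bool (w i = j) :: real) = 1"
  proof -
    have "{0..<r} \<inter> {j. w i = j} = {w i}" using wi by auto
    then show ?thesis by simp
  qed
  also have "(\<Sum>j\<in>{0..<r}. of_bool (l i = j) :: real) = 1"
  proof -
    have "{0..<r} \<inter> {j. l i = j} = {l i}" using li by auto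
    then show ?thesis by simp
  qed
  finally show "(\<Sum>j\<in>{0..<r}. freq_upd K p w l i j) = 1" using gi(2) by simp
qed

lemma good_state:
  assumes "cga_state n r K t p" "K > 0" "\<exists>m::nat. 1 / real r = real m * (1 / K)" "r \<ge> 1"
  shows "good n r K p"
  using assms(1)
proof (induction rule: cga_state.induct)
  case init
  obtain m :: nat where "1 / real r = real m * (1 / K)" using assms(3) by auto
  then have m: "1 / real r = real m / K" by simp
  have "(\<Sum>j\<in>{0..<r}. 1 / real r) = 1" using assms(4) by simp
  then show ?case unfolding good_def using m by metis
next
  case (step t p x y)
  then show ?case unfolding cga_step_def using good_upd[OF _ assms(2)] by auto
qed

lemma phi_upd: "phi n r p - phi n r (freq_upd K p w l) = (real (rOneMax n r w) - real (rOneMax n r l)) / K"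
proof -
  have "phi n r p - phi n r (freq_upd K p w l) = (\<Sum>i<n. freq_upd K p w l i (r - 1) - p i (r - 1))"
    unfolding phi_def by (simp add: sum_subtractf[symmetric])
  also have "\<dots> = (\<Sum>i<n. (1 / K) * (of_bool (w i = r - 1) - of_bool (l i = r - 1)))"
    unfolding freq_upd_def by (intro sum.cong refl) simp
  also have "\<dots> = (1 / K) * ((\<Sum>i<n. of_bool (w i = r - 1)) - (\<Sum>i<n. of_bool (l i = r - 1)))"
    by (simp only: sum_distrib_left[symmetric] sum_subtractf)
  also have "\<dots> = (real (rOneMax n r w) - real (rOneMax n r l)) / K"
    unfolding om_sum by simp
  finally show ?thesis .
qed

lemma phi_step: "phi n r p - phi n r (cga_step n r K p x y) = \<bar>real (rOneMax n r x) - real (rOneMax n r y)\<bar> / K"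
  unfolding cga_step_def by (auto simp: phi_upd)

lemma drift_W: "expected_drift n r K p = W n r p (\<lambda>z. (1 / K) * \<bar>z\<bar>)"
  unfolding expected_drift_def W_def phi_step by simp

lemma pointwise: assumes "t > 0" shows "3 / (2 * t) * z^2 + (- 1 / (2 * t^3)) * z^4 \<le> \<bar>z::real\<bar>"
proof -
  define w where "w = \<bar>z\<bar>"
  have w0: "w \<ge> 0" unfolding w_def by simp
  have z2: "z^2 = w^2" and z4: "z^4 = w^4" unfolding w_def by (simp_all add: power_even_abs_numeral)
  have "0 \<le> w * (w - t)^2 * (w + 2 * t)" using w0 assms by simp
  also have "w * (w - t)^2 * (w + 2 * t) = w^4 - 3 * t^2 * w^2 + 2 * t^3 * w" by algebra
  finally have *: "3 * t^2 * w^2 - w^4 \<le> 2 * t^3 * w" by simp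
  have "3 / (2 * t) * w^2 + (- 1 / (2 * t^3)) * w^4 = (3 * t^2 * w^2 - w^4) / (2 * t^3)"
    using assms by (simp add: field_simps power2_eq_square power3_eq_cube)
  also have "\<dots> \<le> (2 * t^3 * w) / (2 * t^3)"
    using * assms by (intro divide_right_mono) auto
  also have "\<dots> = w" using assms by simp
  finally show ?thesis unfolding z2 z4 w_def .
qed

lemma final_alg:
  fixes A B ph s u :: real
  assumes u: "u > 0" "u^2 = ph" and ph: "ph \<ge> 1/2" and s: "s > 0"
    and A: "2 * s * ph \<le> A" "A \<le> 2 * ph" and B: "B \<le> A + 3 * A^2"
  shows "2 * s * u / 15 \<le> 3 / (2 * (3*u)) * A + (- 1 / (2 * (3*u)^3)) * B"
proof -
  have "0 < 2 * s * ph" using s ph by simp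
  then have A0: "A \<ge> 0" using A(1) by linarith
  have "A * A \<le> (2 * ph) * A" by (rule mult_right_mono[OF A(2) A0])
  then have f1: "3 * A^2 \<le> 6 * (ph * A)" by (simp add: power2_eq_square algebra_simps)
  have "2 * s * ph * (21 * ph - 1) \<le> A * (21 * ph - 1)" using A(1) ph by (intro mult_right_mono) auto
  then have f2: "42 * (s * ph^2) - 2 * (s * ph) \<le> 21 * (ph * A) - A" by (simp add: algebra_simps power2_eq_square)
  have "0 \<le> s * ph * (174 * ph - 10)" using s ph by (intro mult_nonneg_nonneg) auto
  then have f3: "0 \<le> 174 * (s * ph^2) - 10 * (s * ph)" by (simp add: algebra_simps power2_eq_square)
  have key: "36 / 5 * (s * ph^2) \<le> 27 * (ph * A) - A - 3 * A^2"
    using f1 f2 f3 by linarith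
  have c: "- 1 / (2 * (3*u)^3) < 0" using u by simp
  have "3 / (2 * (3*u)) * A + (- 1 / (2 * (3*u)^3)) * B \<ge> 3 / (2 * (3*u)) * A + (- 1 / (2 * (3*u)^3)) * (A + 3 * A^2)"
    using B c by (intro add_left_mono mult_left_mono_neg) auto
  moreover have "3 / (2 * (3*u)) * A + (- 1 / (2 * (3*u)^3)) * (A + 3 * A^2) = (27 * (ph * A) - A - 3 * A^2) / (54 * u * ph)"
    using u by (auto simp: field_simps power2_eq_square power3_eq_cube)
  moreover have "(27 * (ph * A) - A - 3 * A^2) / (54 * u * ph) \<ge> (36 / 5 * (s * ph^2)) / (54 * u * ph)"
    using key u ph by (intro divide_right_mono) auto
  moreover have "(36 / 5 * (s * ph^2)) / (54 * u * ph) = 2 * s * u / 15"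
    using u ph by (auto simp: field_simps power2_eq_square)
  ultimately show ?thesis by linarith
qed


theorem lemma4:
  fixes n r t :: nat and K s :: real and p :: "nat \<Rightarrow> nat \<Rightarrow> real"
  assumes "n \<ge> 1" and "r \<ge> 2" and "K > 0"
    and "\<exists>m::nat. 1 / real r = real m * (1 / K)"
    and "cga_state n r K t p"
    and "s > 0" and "\<forall>i<n. p i (r - 1) \<ge> s"
    and "phi n r p \<ge> 1 / 2"
  shows "expected_drift n r K p \<ge> 2 * s * sqrt (phi n r p) / (15 * K)"
proof -
  have r1: "r \<ge> 1" using assms(2) by simp
  have g: "good n r K p" using good_state[OF assms(5) assms(3) assms(4) r1] .
  have Hs: "\<forall>i<n. (\<Sum>j\<in>{0..<r}. p i j) = 1" using g unfolding good_def by auto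
  have nn: "\<forall>i<n. \<forall>j<r. p i j \<ge> 0"
  proof (intro allI impI)
    fix i j assume "i < n" "j < r"
    then obtain m :: nat where "p i j = real m / K" using g unfolding good_def by blast
    then show "p i j \<ge> 0" using assms(3) by simp
  qed
  have q1: "p i (r - 1) \<le> 1" if i: "i < n" for i
  proof -
    have "p i (r - 1) \<le> (\<Sum>j\<in>{0..<r}. p i j)"
      using nn i r1 by (intro member_le_sum) auto
    then show ?thesis using Hs i by simp
  qed
  define ph where "ph = phi n r p"
  define A where "A = W n r p (\<lambda>z. z^2)"
  define B where "B = W n r p (\<lambda>z. z^4)"
  have mom: "A = 2 * (\<Sum>i<n. p i (r - 1) * (1 - p i (r - 1)))" "B \<le> A + 3 * A^2"
    using W_moments[OF r1 Hs] unfolding A_def B_def by auto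
  have "s * ph = (\<Sum>i<n. s * (1 - p i (r - 1)))" unfolding ph_def phi_def by (simp add: sum_distrib_left)
  also have "\<dots> \<le> (\<Sum>i<n. p i (r - 1) * (1 - p i (r - 1)))"
    using assms(7) q1 by (intro sum_mono mult_right_mono) auto
  finally have Alo: "2 * s * ph \<le> A" using mom(1) by simp
  have "(\<Sum>i<n. p i (r - 1) * (1 - p i (r - 1))) \<le> (\<Sum>i<n. 1 * (1 - p i (r - 1)))"
    using q1 by (intro sum_mono mult_right_mono) auto
  then have Ahi: "A \<le> 2 * ph" using mom(1) unfolding ph_def phi_def by simp
  define u where "u = sqrt ph"
  have ph2: "ph \<ge> 1/2" using assms(8) unfolding ph_def .
  have u0: "u > 0" unfolding u_def using ph2 by simp
  have u2: "u^2 = ph" unfolding u_def using ph2 by simp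
  have fa: "2 * s * u / 15 \<le> 3 / (2 * (3*u)) * A + (- 1 / (2 * (3*u)^3)) * B"
    using final_alg[OF u0 u2 ph2 assms(6) Alo Ahi mom(2)] .
  have "3 / (2 * (3*u)) * A + (- 1 / (2 * (3*u)^3)) * B
      = W n r p (\<lambda>z. 3 / (2 * (3*u)) * z^2 + (- 1 / (2 * (3*u)^3)) * z^4)"
    unfolding A_def B_def W_lin W_lin1 ..
  also have "\<dots> \<le> W n r p (\<lambda>z. \<bar>z\<bar>)"
    using nn u0 by (intro W_mono pointwise) auto
  finally have "2 * s * u / 15 \<le> W n r p (\<lambda>z. \<bar>z\<bar>)" using fa by linarith
  then have "2 * s * u / 15 / K \<le> W n r p (\<lambda>z. \<bar>z\<bar>) / K"
    using assms(3) by (intro divide_right_mono) auto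
  moreover have "expected_drift n r K p = W n r p (\<lambda>z. \<bar>z\<bar>) / K"
    unfolding drift_W W_lin1 by simp
  ultimately show ?thesis unfolding u_def ph_def by simp
qed

end
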